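(* Let $1\le \ell\le k-1$, $n\ge 187k$, and let $G$ be an extremal graph as in the context. Then $\lambda(G)>\lfloor (n-2\ell)/2\rfloor> n/2-k$ and $e(G)\ge \frac{n^2}{4}-kn+k$.
   Context: Fix integers $1\le\ell\le k-1$ and $n\ge 187k$. Let $\mathcal{C}_{\ell,k}=\{C_3,C_5,\ldots,C_{2\ell-1},C_{2k+1}\}$ (for $\ell=1$, $\mathcal{C}_{1,k}=\{C_{2k+1}\}$). An extremal graph is an $n$-vertex non-bipartite graph $G$ containing no member of $\mathcal{C}_{\ell,k}$ as a subgraph and having the maximum spectral radius $\lambda(G)$ (largest adjacency eigenvalue) among all such graphs. $T_{m,2}$ is the balanced complete bipartite graph on $m$ vertices, and $C_{2\ell+1}(T_{n-2\ell,2})$ is the graph obtained by identifying a vertex of $C_{2\ell+1}$ with a vertex of the smaller part of $T_{n-2\ell,2}$; it is non-bipartite and $\mathcal{C}_{\ell,k}$-free, so $\lambda(G)\ge\lambda(C_{2\ell+1}(T_{n-2\ell,2}))$. $e(G)$ is the number of edges. *)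

theory Defs
  imports Complex_Main "Jordan_Normal_Form.Char_Poly"
begin

definition simple_graph :: "nat \<Rightarrow> (nat \<Rightarrow> nat \<Rightarrow> bool) \<Rightarrow> bool" where
  "simple_graph n E \<longleftrightarrow> (\<forall>u v. E u v \<longrightarrow> u < n \<and> v < n \<and> u \<noteq> v \<and> E v u)"

definition num_edges :: "nat \<Rightarrow> (nat \<Rightarrow> nat \<Rightarrow> bool) \<Rightarrow> nat" where
  "num_edges n E = card {(u, v). u < v \<and> v < n \<and> E u v}"

definition bipartite :: "nat \<Rightarrow> (nat \<Rightarrow> nat \<Rightarrow> bool) \<Rightarrow> bool" where
  "bipartite n E \<longleftrightarrow> (\<exists>S. \<forall>u<n. \<forall>v<n. E u v \<longrightarrow> (u \<in> S \<longleftrightarrow> v \<notin> S))"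

definition has_cycle :: "nat \<Rightarrow> (nat \<Rightarrow> nat \<Rightarrow> bool) \<Rightarrow> nat \<Rightarrow> bool" where
  "has_cycle n E m \<longleftrightarrow> 3 \<le> m \<and> (\<exists>f. inj_on f {0..<m} \<and> f ` {0..<m} \<subseteq> {0..<n} \<and>
       (\<forall>i<m. E (f i) (f (Suc i mod m))))"

definition Clk_free :: "nat \<Rightarrow> nat \<Rightarrow> nat \<Rightarrow> (nat \<Rightarrow> nat \<Rightarrow> bool) \<Rightarrow> bool" where
  "Clk_free l k n E \<longleftrightarrow> (\<forall>i. 1 \<le> i \<and> i \<le> l - 1 \<longrightarrow> \<not> has_cycle n E (2 * i + 1))
      \<and> \<not> has_cycle n E (2 * k + 1)"

definition adj_mat :: "nat \<Rightarrow> (nat \<Rightarrow> nat \<Rightarrow> bool) \<Rightarrow> real mat" where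
  "adj_mat n E = mat n n (\<lambda>(i, j). if E i j then 1 else 0)"

definition spec_rad :: "nat \<Rightarrow> (nat \<Rightarrow> nat \<Rightarrow> bool) \<Rightarrow> real" where
  "spec_rad n E = Max {\<mu>. eigenvalue (adj_mat n E) \<mu>}"

definition extremal :: "nat \<Rightarrow> nat \<Rightarrow> nat \<Rightarrow> (nat \<Rightarrow> nat \<Rightarrow> bool) \<Rightarrow> bool" where
  "extremal l k n E \<longleftrightarrow> simple_graph n E \<and> \<not> bipartite n E \<and> Clk_free l k n E \<and>
     (\<forall>H. simple_graph n H \<and> \<not> bipartite n H \<and> Clk_free l k n H \<longrightarrow> spec_rad n H \<le> spec_rad n E)"

end

theory Submission
  imports Defs "Jordan_Normal_Form.Spectral_Radius"
begin

lemma sum_sq_le_card: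
  fixes f :: "'a \<Rightarrow> real"
  assumes "finite A"
  shows "(\<Sum>i\<in>A. f i)^2 \<le> real (card A) * (\<Sum>i\<in>A. (f i)^2)"
proof -
  have "(\<Sum>i\<in>A. f i)^2 = (\<Sum>i\<in>A. \<Sum>j\<in>A. f i * f j)"
    by (simp add: power2_eq_square sum_product)
  also have "\<dots> \<le> (\<Sum>i\<in>A. \<Sum>j\<in>A. ((f i)^2 + (f j)^2) / 2)"
  proof (intro sum_mono)
    fix i j show "f i * f j \<le> ((f i)^2 + (f j)^2) / 2"
      using sum_squares_ge_zero[of "f i - f j" 0] by (simp add: power2_eq_square algebra_simps)
  qed
  also have "\<dots> = (\<Sum>i\<in>A. \<Sum>j\<in>A. (f i)^2 / 2) + (\<Sum>i\<in>A. \<Sum>j\<in>A. (f j)^2 / 2)"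
    by (simp add: sum.distrib add_divide_distrib)
  also have "\<dots> = real (card A) * (\<Sum>i\<in>A. (f i)^2)"
    by (simp add: sum_divide_distrib[symmetric] sum.swap[of _ A A] sum_distrib_left[symmetric]
        mult.commute)
  finally show ?thesis .
qed

lemma diag_subseq:
  fixes Y :: "nat \<Rightarrow> nat \<Rightarrow> real"
  assumes "\<And>j i. i < n \<Longrightarrow> \<bar>Y j i\<bar> \<le> 1"
  shows "\<exists>r z. strict_mono r \<and> (\<forall>i<n. (\<lambda>j. Y (r j) i) \<longlonglongrightarrow> z i)"
  using assms
proof (induction n)
  case 0
  then show ?case by (intro exI[of _ id] exI[of _ "\<lambda>_. 0"]) (auto simp: strict_mono_def)
next
  case (Suc n)
  then obtain r z where r: "strict_mono r" and z: "\<forall>i<n. (\<lambda>j. Y (r j) i) \<longlonglongrightarrow> z i"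
    by force
  obtain r' where r': "strict_mono r'" and mono: "monoseq (\<lambda>j. Y (r (r' j)) n)"
    using seq_monosub[of "\<lambda>j. Y (r j) n"] by blast
  have "Bseq (\<lambda>j. Y (r (r' j)) n)"
    using Suc.prems by (intro BseqI[of 1]) auto
  then have "convergent (\<lambda>j. Y (r (r' j)) n)"
    using mono Bseq_monoseq_convergent by blast
  then obtain L where L: "(\<lambda>j. Y (r (r' j)) n) \<longlonglongrightarrow> L"
    by (auto simp: convergent_def)
  show ?case
  proof (intro exI[of _ "r \<circ> r'"] exI[of _ "z(n := L)"] conjI allI impI)
    show "strict_mono (r \<circ> r')" using r r' by (rule strict_mono_o)
    fix i assume "i < Suc n"
    show "(\<lambda>j. Y ((r \<circ> r') j) i) \<longlonglongrightarrow> (z(n := L)) i"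
    proof (cases "i = n")
      case True then show ?thesis using L by simp
    next
      case False
      then have "i < n" using \<open>i < Suc n\<close> by simp
      then have "(\<lambda>j. Y (r j) i) \<longlonglongrightarrow> z i" using z by simp
      from LIMSEQ_subseq_LIMSEQ[OF this r'] show ?thesis using False by (simp add: o_def)
    qed
  qed
qed

lemma var_max:
  fixes a :: "nat \<Rightarrow> nat \<Rightarrow> real" and n :: nat
  assumes n: "0 < n" and sym: "\<And>i j. a i j = a j i"
  shows "\<exists>x \<mu>. (\<Sum>i<n. (x i)^2) = 1 \<and> (\<forall>i<n. (\<Sum>j<n. a i j * x j) = \<mu> * x i)
     \<and> (\<forall>y. (\<Sum>i<n. \<Sum>j<n. a i j * y i * y j) \<le> \<mu> * (\<Sum>i<n. (y i)^2))"
proof -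
  define Q where "Q y = (\<Sum>i<n. \<Sum>j<n. a i j * y i * y j)" for y :: "nat \<Rightarrow> real"
  define N where "N y = (\<Sum>i<n. (y i)^2)" for y :: "nat \<Rightarrow> real"
  define M where "M = (\<Sum>i<n. \<Sum>j<n. \<bar>a i j\<bar>)"
  have coord: "(y i)^2 \<le> N y" if "i < n" for y i
    unfolding N_def using that by (intro member_le_sum) auto
  have prod: "\<bar>y i * y j\<bar> \<le> N y" if "i < n" "j < n" for y i j
  proof -
    have "\<bar>y i * y j\<bar> \<le> ((y i)^2 + (y j)^2) / 2"
      using sum_squares_ge_zero[of "\<bar>y i\<bar> - \<bar>y j\<bar>" 0]
      by (simp add: power2_eq_square algebra_simps abs_mult)
    also have "\<dots> \<le> N y" using coord[OF that(1), of y] coord[OF that(2), of y] by simp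
    finally show ?thesis .
  qed
  have Qbound: "Q y \<le> M * N y" for y
  proof -
    have "Q y \<le> (\<Sum>i<n. \<Sum>j<n. \<bar>a i j\<bar> * N y)"
      unfolding Q_def
    proof (intro sum_mono)
      fix i j assume "i \<in> {..<n}" "j \<in> {..<n}"
      then have "\<bar>a i j\<bar> * \<bar>y i * y j\<bar> \<le> \<bar>a i j\<bar> * N y"
        using prod by (intro mult_left_mono) auto
      have "a i j * y i * y j \<le> \<bar>a i j * y i * y j\<bar>" by (rule abs_ge_self)
      also have "\<dots> = \<bar>a i j\<bar> * \<bar>y i * y j\<bar>" by (simp add: abs_mult mult.assoc)
      finally show "a i j * y i * y j \<le> \<bar>a i j\<bar> * N y" using \<open>\<bar>a i j\<bar> * \<bar>y i * y j\<bar> \<le> \<bar>a i j\<bar> * N y\<close> by linarith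
    qed
    also have "\<dots> = M * N y" unfolding M_def by (simp add: sum_distrib_right)
    finally show ?thesis .
  qed
  define U where "U = {y. N y = 1}"
  define s where "s = Sup (Q ` U)"
  define e0 where "e0 = (\<lambda>i::nat. if i = 0 then 1 else (0::real))"
  have "N e0 = (\<Sum>i<n. if i = 0 then 1 else 0)" unfolding N_def e0_def by (intro sum.cong) auto
  also have "\<dots> = 1" using n by simp
  finally have "N e0 = 1" .
  then have ne: "Q ` U \<noteq> {}" unfolding U_def by auto
  have QM: "Q y \<le> M" if "N y = 1" for y using Qbound[of y] that by simp
  have bdd: "bdd_above (Q ` U)"
    using QM unfolding U_def by (intro bdd_aboveI[of _ M]) auto
  have le_s: "Q y \<le> s" if "y \<in> U" for y
    unfolding s_def using that bdd by (intro cSup_upper) auto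
  have "\<exists>y. y \<in> U \<and> s - 1 / real (Suc j) < Q y" for j
  proof -
    have "s - 1 / real (Suc j) < s" by simp
    then show ?thesis unfolding s_def using less_cSup_iff[OF ne bdd] by auto
  qed
  then obtain Y where Y: "\<And>j. Y j \<in> U" "\<And>j. s - 1 / real (Suc j) < Q (Y j)"
    by metis
  have "\<bar>Y j i\<bar> \<le> 1" if "i < n" for j i
    using coord[OF that, of "Y j"] Y(1)[of j] unfolding U_def by (simp add: abs_square_le_1)
  then obtain r z where r: "strict_mono r" and lim: "\<forall>i<n. (\<lambda>j. Y (r j) i) \<longlonglongrightarrow> z i"
    using diag_subseq by blast
  have Qlim: "(\<lambda>j. Q (Y (r j))) \<longlonglongrightarrow> Q z"
    unfolding Q_def using lim by (auto intro!: tendsto_sum tendsto_mult tendsto_const)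
  have Nlim: "(\<lambda>j. N (Y (r j))) \<longlonglongrightarrow> N z"
    unfolding N_def using lim by (auto intro!: tendsto_sum tendsto_power)
  have "(\<lambda>j. N (Y (r j))) = (\<lambda>j. 1)" using Y(1) unfolding U_def by auto
  with Nlim have Nz: "N z = 1" using LIMSEQ_unique tendsto_const by metis
  then have Qz_le: "Q z \<le> s" using le_s unfolding U_def by auto
  have Qz_ge: "s - 1 / real (Suc J) \<le> Q z" for J
  proof (rule LIMSEQ_le_const[OF Qlim], intro exI[of _ J] allI impI)
    fix j assume "J \<le> j"
    then have "J \<le> r j" using seq_suble[OF r, of j] by simp
    then have "1 / real (Suc (r j)) \<le> 1 / real (Suc J)"
      by (intro divide_left_mono) auto
    then show "s - 1 / real (Suc J) \<le> Q (Y (r j))" using Y(2)[of "r j"] by simp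
  qed
  have Qz: "Q z = s"
  proof (rule ccontr)
    assume "Q z \<noteq> s"
    then have "0 < s - Q z" using Qz_le by simp
    then obtain J where "J > 0" "inverse (real J) < s - Q z"
      using ex_inverse_of_nat_less by blast
    moreover have "1 / real (Suc J) \<le> 1 / real J" using \<open>J > 0\<close> by (intro divide_left_mono) auto
    ultimately have "1 / real (Suc J) < s - Q z" by (simp add: inverse_eq_divide)
    then show False using Qz_ge[of J] by simp
  qed
  have maxs: "Q y \<le> s * N y" for y
  proof (cases "N y = 0")
    case True
    have "\<forall>i\<in>{..<n}. (y i)^2 = 0"
      using True sum_nonneg_eq_0_iff[of "{..<n}" "\<lambda>i. (y i)^2"] unfolding N_def by simp
    then have "Q y = 0" unfolding Q_def by simp
    then show ?thesis using True by simp
  next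
    case False
    have "N y \<ge> 0" unfolding N_def by (intro sum_nonneg) auto
    with False have Npos: "N y > 0" by simp
    define r where "r = sqrt (N y)"
    have rr: "r * r = N y" unfolding r_def using Npos by simp
    have rp: "r > 0" unfolding r_def using Npos by simp
    define w where "w i = y i / r" for i
    have "N w = (\<Sum>i<n. (y i)^2 / (r * r))" unfolding w_def N_def
      by (intro sum.cong refl) (simp add: power_divide power2_eq_square)
    also have "\<dots> = N y / N y" unfolding rr N_def by (simp only: sum_divide_distrib)
    finally have "w \<in> U" unfolding U_def using Npos by simp
    moreover have "Q w = (\<Sum>i<n. \<Sum>j<n. a i j * y i * y j / (r * r))" unfolding w_def Q_def
      by (intro sum.cong refl) simp
    then have "Q w = Q y / N y" unfolding rr Q_def by (simp only: sum_divide_distrib)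
    ultimately have "Q y / N y \<le> s" using le_s by metis
    then show ?thesis using Npos by (simp add: divide_le_eq mult.commute)
  qed
  define g where "g i = (\<Sum>j<n. a i j * z j) - s * z i" for i
  define G where "G = (\<Sum>i<n. (g i)^2)"
  define D where "D = Q g - s * N g"
  have expQ: "Q (\<lambda>i. z i + t * g i) = Q z + 2 * t * (\<Sum>i<n. g i * (\<Sum>j<n. a i j * z j)) + t^2 * Q g"
    for t
  proof -
    have "Q (\<lambda>i. z i + t * g i) = (\<Sum>i<n. \<Sum>j<n. a i j * z i * z j + t * (a i j * g i * z j) + t * (a i j * z i * g j) + t^2 * (a i j * g i * g j))"
      unfolding Q_def by (intro sum.cong refl) (simp add: algebra_simps power2_eq_square)
    also have "\<dots> = Q z + t * (\<Sum>i<n. \<Sum>j<n. a i j * g i * z j) + t * (\<Sum>i<n. \<Sum>j<n. a i j * z i * g j) + t^2 * Q g"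
      unfolding Q_def by (simp add: sum.distrib sum_distrib_left)
    also have "(\<Sum>i<n. \<Sum>j<n. a i j * z i * g j) = (\<Sum>i<n. \<Sum>j<n. a i j * g i * z j)"
      by (subst sum.swap) (simp add: sym mult.commute mult.left_commute)
    also have "(\<Sum>i<n. \<Sum>j<n. a i j * g i * z j) = (\<Sum>i<n. g i * (\<Sum>j<n. a i j * z j))"
      by (simp add: sum_distrib_left mult.commute mult.left_commute)
    finally show ?thesis by (simp add: algebra_simps)
  qed
  have expN: "N (\<lambda>i. z i + t * g i) = N z + 2 * t * (\<Sum>i<n. g i * z i) + t^2 * N g" for t
    unfolding N_def
    by (simp add: power2_eq_square algebra_simps sum.distrib sum_distrib_left)
  have key: "2 * t * G + t^2 * D \<le> 0" for t
  proof -
    have "Q (\<lambda>i. z i + t * g i) \<le> s * N (\<lambda>i. z i + t * g i)" by (rule maxs)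
    moreover have "(\<Sum>i<n. g i * (\<Sum>j<n. a i j * z j)) - s * (\<Sum>i<n. g i * z i) = G"
      unfolding G_def g_def
      by (simp add: power2_eq_square sum_subtractf[symmetric] sum_distrib_left algebra_simps)
    ultimately show ?thesis using Qz Nz unfolding expQ expN D_def by (simp add: algebra_simps)
  qed
  have G0: "G = 0"
  proof (rule ccontr)
    assume "G \<noteq> 0"
    moreover have "G \<ge> 0" unfolding G_def by (intro sum_nonneg) auto
    ultimately have Gp: "G > 0" by simp
    define t where "t = G / (1 + \<bar>D\<bar>)"
    have tp: "t > 0" unfolding t_def using Gp by (simp add: add_pos_nonneg)
    have "t * \<bar>D\<bar> \<le> G" unfolding t_def using Gp
      by (simp add: divide_le_eq field_simps)
    then have "t * (t * \<bar>D\<bar>) \<le> t * G" using tp by (intro mult_left_mono) auto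
    moreover have "- (t^2 * \<bar>D\<bar>) \<le> t^2 * D"
      using mult_left_mono[of "-\<bar>D\<bar>" D "t^2"] by simp
    ultimately have "t * G \<le> 2 * t * G + t^2 * D" by (simp add: power2_eq_square algebra_simps)
    then show False using key[of t] tp Gp by (smt (verit) mult_pos_pos)
  qed
  have "\<forall>i<n. g i = 0"
  proof -
    have "\<forall>i\<in>{..<n}. (g i)^2 = 0" using G0 unfolding G_def
      by (subst sum_nonneg_eq_0_iff[symmetric]) auto
    then show ?thesis by simp
  qed
  then have "\<forall>i<n. (\<Sum>j<n. a i j * z j) = s * z i" unfolding g_def by simp
  then show ?thesis using Nz maxs unfolding N_def Q_def by blast
qed


lemma adj_mat_carrier: "adj_mat n E \<in> carrier_mat n n"
  by (simp add: adj_mat_def)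

lemma adj_mat_index: "i < n \<Longrightarrow> j < n \<Longrightarrow> adj_mat n E $$ (i, j) = (if E i j then 1 else 0)"
  by (simp add: adj_mat_def)

lemma adj_mult_index:
  assumes "i < n"
  shows "(adj_mat n E *\<^sub>v vec n x) $ i = (\<Sum>j<n. (if E i j then 1 else 0) * x j)"
proof -
  have "(adj_mat n E *\<^sub>v vec n x) $ i = row (adj_mat n E) i \<bullet> vec n x"
    using assms adj_mat_carrier[of n E] by simp
  also have "\<dots> = (\<Sum>j\<in>{0..<n}. (row (adj_mat n E) i) $ j * x j)"
    by (simp add: scalar_prod_def)
  also have "\<dots> = (\<Sum>j<n. (if E i j then 1 else 0) * x j)"
    using assms by (intro sum.cong) (auto simp: adj_mat_def)
  finally show ?thesis .
qed

lemma ev_of_fun: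
  assumes "\<exists>i<n. x i \<noteq> 0" "\<forall>i<n. (\<Sum>j<n. (if E i j then 1 else 0) * x j) = \<mu> * x i"
  shows "eigenvalue (adj_mat n E) \<mu>"
  unfolding eigenvalue_def eigenvector_def
proof (intro exI[of _ "vec n x"] conjI)
  have dr: "dim_row (adj_mat n E) = n" by (simp add: adj_mat_def)
  show "vec n x \<in> carrier_vec (dim_row (adj_mat n E))" by (simp add: dr)
  from assms(1) obtain i where i: "i < n" "x i \<noteq> 0" by blast
  show "vec n x \<noteq> 0\<^sub>v (dim_row (adj_mat n E))"
  proof
    assume "vec n x = 0\<^sub>v (dim_row (adj_mat n E))"
    then have "vec n x $ i = 0\<^sub>v n $ i" by (simp add: dr)
    then show False using i by simp
  qed
  show "adj_mat n E *\<^sub>v vec n x = \<mu> \<cdot>\<^sub>v vec n x"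
  proof (rule eq_vecI)
    show "dim_vec (adj_mat n E *\<^sub>v vec n x) = dim_vec (\<mu> \<cdot>\<^sub>v vec n x)" by (simp add: dr)
    fix i assume "i < dim_vec (\<mu> \<cdot>\<^sub>v vec n x)"
    then have i: "i < n" by simp
    show "(adj_mat n E *\<^sub>v vec n x) $ i = (\<mu> \<cdot>\<^sub>v vec n x) $ i"
      using adj_mult_index[OF i, of E x] assms(2) i by simp
  qed
qed

lemma fun_of_ev:
  assumes "eigenvalue (adj_mat n E) \<mu>"
  shows "\<exists>x. (\<exists>i<n. x i \<noteq> 0) \<and> (\<forall>i<n. (\<Sum>j<n. (if E i j then 1 else 0) * x j) = \<mu> * x i)"
proof -
  have dr: "dim_row (adj_mat n E) = n" by (simp add: adj_mat_def)
  from assms obtain v where v: "v \<in> carrier_vec n" "v \<noteq> 0\<^sub>v n" "adj_mat n E *\<^sub>v v = \<mu> \<cdot>\<^sub>v v"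
    unfolding eigenvalue_def eigenvector_def dr by blast
  define x where "x i = v $ i" for i
  have vx: "v = vec n x" using v(1) unfolding x_def by auto
  have "\<exists>i<n. x i \<noteq> 0"
  proof (rule ccontr)
    assume "\<not> (\<exists>i<n. x i \<noteq> 0)"
    then have "v = 0\<^sub>v n" using v(1) unfolding x_def by (intro eq_vecI) auto
    then show False using v(2) by simp
  qed
  moreover have "\<forall>i<n. (\<Sum>j<n. (if E i j then 1 else 0) * x j) = \<mu> * x i"
  proof (intro allI impI)
    fix i assume i: "i < n"
    have "(adj_mat n E *\<^sub>v vec n x) $ i = (\<mu> \<cdot>\<^sub>v vec n x) $ i" using v(3) vx by simp
    then show "(\<Sum>j<n. (if E i j then 1 else 0) * x j) = \<mu> * x i"
      using adj_mult_index[OF i, of E x] i by simp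
  qed
  ultimately show ?thesis by blast
qed

lemma ev_finite: "finite {\<mu>. eigenvalue (adj_mat n E) \<mu>}"
  using card_finite_spectrum(1)[OF adj_mat_carrier[of n E]] unfolding spectrum_def by simp

lemma spec_rad_ge: "eigenvalue (adj_mat n E) \<mu> \<Longrightarrow> \<mu> \<le> spec_rad n E"
  unfolding spec_rad_def using ev_finite[of n E] by (intro Max_ge) auto

lemma simple_sym: "simple_graph n E \<Longrightarrow> E i j = E j i"
  unfolding simple_graph_def by blast

lemma var_graph:
  assumes "0 < n" "simple_graph n E"
  shows "\<exists>x \<mu>. (\<Sum>i<n. (x i)^2) = 1 \<and> (\<forall>i<n. (\<Sum>j<n. (if E i j then 1 else (0::real)) * x j) = \<mu> * x i)
     \<and> (\<forall>y. (\<Sum>i<n. \<Sum>j<n. (if E i j then 1 else (0::real)) * y i * y j) \<le> \<mu> * (\<Sum>i<n. (y i)^2))"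
  using var_max[of n "\<lambda>i j. if E i j then 1 else 0"] assms simple_sym[OF assms(2)] by simp

lemma sumsq_one_nz: "(\<Sum>i<n. (x i)^2) = (1::real) \<Longrightarrow> \<exists>i<n. x i \<noteq> 0"
  by (rule ccontr) auto

lemma spec_rad_ev:
  assumes "0 < n" "simple_graph n E"
  shows "eigenvalue (adj_mat n E) (spec_rad n E)"
proof -
  obtain x \<mu> where "(\<Sum>i<n. (x i)^2) = 1" "\<forall>i<n. (\<Sum>j<n. (if E i j then 1 else (0::real)) * x j) = \<mu> * x i"
    using var_graph[OF assms] by blast
  then have "eigenvalue (adj_mat n E) \<mu>" using sumsq_one_nz ev_of_fun by blast
  then have "{\<mu>. eigenvalue (adj_mat n E) \<mu>} \<noteq> {}" by blast
  then show ?thesis unfolding spec_rad_def using Max_in[OF ev_finite] by blast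
qed

lemma rayleigh:
  assumes "0 < n" "simple_graph n E"
  shows "(\<Sum>i<n. \<Sum>j<n. (if E i j then 1 else (0::real)) * y i * y j) \<le> spec_rad n E * (\<Sum>i<n. (y i)^2)"
proof -
  obtain x \<mu> where x: "(\<Sum>i<n. (x i)^2) = 1" "\<forall>i<n. (\<Sum>j<n. (if E i j then 1 else (0::real)) * x j) = \<mu> * x i"
    and mx: "\<forall>y. (\<Sum>i<n. \<Sum>j<n. (if E i j then 1 else (0::real)) * y i * y j) \<le> \<mu> * (\<Sum>i<n. (y i)^2)"
    using var_graph[OF assms] by blast
  then have "eigenvalue (adj_mat n E) \<mu>" using sumsq_one_nz ev_of_fun by blast
  then have "\<mu> \<le> spec_rad n E" by (rule spec_rad_ge)
  moreover have "(\<Sum>i<n. (y i)^2) \<ge> 0" by (intro sum_nonneg) auto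
  ultimately have "\<mu> * (\<Sum>i<n. (y i)^2) \<le> spec_rad n E * (\<Sum>i<n. (y i)^2)"
    by (intro mult_right_mono)
  then show ?thesis using mx by (meson order_trans)
qed


definition Kp :: "nat \<Rightarrow> nat \<Rightarrow> nat \<Rightarrow> nat \<Rightarrow> nat \<Rightarrow> bool" where
  "Kp n c p u v \<longleftrightarrow> c \<le> u \<and> u < n \<and> c \<le> v \<and> v < n \<and> (u < p \<longleftrightarrow> \<not> v < p)"

definition Cy :: "nat \<Rightarrow> nat \<Rightarrow> nat \<Rightarrow> bool" where
  "Cy c u v \<longleftrightarrow> u \<le> c \<and> v \<le> c \<and> (u = Suc v \<or> v = Suc u \<or> (u = 0 \<and> v = c) \<or> (u = c \<and> v = 0))"

definition Hg :: "nat \<Rightarrow> nat \<Rightarrow> nat \<Rightarrow> nat \<Rightarrow> nat \<Rightarrow> bool" where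
  "Hg n c p u v \<longleftrightarrow> Kp n c p u v \<or> Cy c u v"

lemma H_simple: "2 \<le> c \<Longrightarrow> c < n \<Longrightarrow> simple_graph n (Hg n c p)"
  unfolding simple_graph_def Hg_def Kp_def Cy_def by auto

lemma H_nonbip:
  assumes "2 \<le> c" "even c" "c < n"
  shows "\<not> bipartite n (Hg n c p)"
proof
  assume "bipartite n (Hg n c p)"
  then obtain S where S: "\<forall>u<n. \<forall>v<n. Hg n c p u v \<longrightarrow> (u \<in> S \<longleftrightarrow> v \<notin> S)"
    unfolding bipartite_def by blast
  have alt: "i \<le> c \<longrightarrow> (i \<in> S \<longleftrightarrow> (0 \<in> S \<longleftrightarrow> even i))" for i
  proof (induction i)
    case 0 then show ?case by simp
  next
    case (Suc i)
    show ?case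
    proof
      assume "Suc i \<le> c"
      then have "Hg n c p i (Suc i)" unfolding Hg_def Cy_def by simp
      then have "i \<in> S \<longleftrightarrow> Suc i \<notin> S" using S \<open>Suc i \<le> c\<close> assms(3) by auto
      then show "Suc i \<in> S \<longleftrightarrow> (0 \<in> S \<longleftrightarrow> even (Suc i))" using Suc \<open>Suc i \<le> c\<close> by auto
    qed
  qed
  have "Hg n c p c 0" unfolding Hg_def Cy_def by simp
  then have "c \<in> S \<longleftrightarrow> 0 \<notin> S" using S assms(3) by auto
  then show False using alt[of c] assms(2) by auto
qed

lemma cycle_even:
  fixes f :: "nat \<Rightarrow> nat" and \<chi> :: "nat \<Rightarrow> bool"
  assumes "\<forall>i<m. \<chi> (f i) \<noteq> \<chi> (f (Suc i mod m))" "1 \<le> m"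
  shows "even m"
proof -
  have alt: "i < m \<longrightarrow> (\<chi> (f i) \<longleftrightarrow> (\<chi> (f 0) \<longleftrightarrow> even i))" for i
  proof (induction i)
    case 0 then show ?case by simp
  next
    case (Suc i)
    show ?case
    proof
      assume "Suc i < m"
      then have "Suc i mod m = Suc i" by simp
      then have "\<chi> (f i) \<noteq> \<chi> (f (Suc i))" using assms(1) \<open>Suc i < m\<close> by (metis Suc_lessD)
      then show "\<chi> (f (Suc i)) \<longleftrightarrow> (\<chi> (f 0) \<longleftrightarrow> even (Suc i))" using Suc \<open>Suc i < m\<close> by auto
    qed
  qed
  have "Suc (m - 1) mod m = 0" using assms(2) by simp
  moreover have "m - 1 < m" using assms(2) by simp
  ultimately have "\<chi> (f (m - 1)) \<noteq> \<chi> (f 0)" using assms(1) by metis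
  then have "\<not> even (m - 1)" using alt[of "m - 1"] assms(2) by auto
  then show ?thesis using assms(2) by (cases m) auto
qed

lemma walk_hub:
  fixes g :: "nat \<Rightarrow> nat"
  assumes adj: "\<forall>r<R. \<not> (X (g r) \<and> Y (g (Suc r)))"
    and cover: "\<forall>r\<le>R. X (g r) \<or> Y (g r) \<or> g r = h"
    and "\<not> X h"
  shows "r1 < r2 \<Longrightarrow> r2 \<le> R \<Longrightarrow> X (g r1) \<Longrightarrow> Y (g r2) \<Longrightarrow> \<exists>r. r1 < r \<and> r < r2 \<and> g r = h"
proof (induction r2)
  case 0 then show ?case by simp
next
  case (Suc r)
  have "\<not> X (g r)" using adj Suc.prems by auto
  then have r1r: "r1 \<noteq> r" using Suc.prems by auto
  then have "r1 < r" using Suc.prems by simp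
  have "r \<le> R" using Suc.prems by simp
  then have "Y (g r) \<or> g r = h" using cover \<open>\<not> X (g r)\<close> by blast
  then show ?case
  proof
    assume "Y (g r)"
    then obtain r' where "r1 < r'" "r' < r" "g r' = h" using Suc.IH Suc.prems \<open>r1 < r\<close> by auto
    then show ?case by auto
  next
    assume "g r = h" then show ?case using \<open>r1 < r\<close> by auto
  qed
qed

lemma H_cycle_len:
  assumes c2: "2 \<le> c" and cp: "c < p" and cyc: "has_cycle n (Hg n c p) m" and odd: "odd m"
  shows "m = Suc c"
proof -
  obtain f where m3: "3 \<le> m" and inj: "inj_on f {0..<m}" and rng: "f ` {0..<m} \<subseteq> {0..<n}"
    and edge: "\<forall>i<m. Hg n c p (f i) (f (Suc i mod m))"
    using cyc unfolding has_cycle_def by blast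
  have split3: "(\<forall>i<m. c \<le> f i) \<or> (\<forall>i<m. f i \<le> c) \<or> ((\<exists>i<m. f i < c) \<and> (\<exists>i<m. c < f i))"
  proof (cases "\<forall>i<m. c \<le> f i")
    case False
    then obtain i where "i < m" "f i < c" by (auto simp: not_le)
    then show ?thesis by (auto simp: not_le)
  qed simp
  consider (K) "\<forall>i<m. c \<le> f i" | (C) "\<forall>i<m. f i \<le> c" | (M) "\<exists>i<m. f i < c" "\<exists>i<m. c < f i"
    using split3 by blast
  then show ?thesis
  proof cases
    case K
    have "\<forall>i<m. (f i < p) \<noteq> (f (Suc i mod m) < p)"
    proof (intro allI impI)
      fix i assume i: "i < m"
      have "Suc i mod m < m" using m3 by simp
      then have "c \<le> f i" "c \<le> f (Suc i mod m)" using K i by auto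
      moreover have "Hg n c p (f i) (f (Suc i mod m))" using edge i by simp
      ultimately show "(f i < p) \<noteq> (f (Suc i mod m) < p)"
        using c2 unfolding Hg_def Kp_def Cy_def by auto
    qed
    from cycle_even[of m "\<lambda>v. v < p" f, OF this] m3 have "even m" by linarith
    then show ?thesis using odd by simp
  next
    case C
    show ?thesis
    proof (rule ccontr)
      assume ne: "m \<noteq> Suc c"
      have sub: "f ` {0..<m} \<subseteq> {0..c}" using C by auto
      have cm: "card (f ` {0..<m}) = m" using inj by (simp add: card_image)
      have "card (f ` {0..<m}) \<le> card {0..c}" by (rule card_mono[OF _ sub]) simp
      then have "m \<le> Suc c" using cm by simp
      then have "m < Suc c" using ne by simp
      have "\<not> {0..c} \<subseteq> f ` {0..<m}"
      proof
        assume "{0..c} \<subseteq> f ` {0..<m}"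
        then have "card {0..c} \<le> card (f ` {0..<m})" by (intro card_mono) auto
        then have "card {0..c} \<le> m" using cm by simp
        then show False using \<open>m < Suc c\<close> by simp
      qed
      then obtain j where j: "j \<le> c" "j \<notin> f ` {0..<m}" by (meson atLeastAtMost_iff le0 subsetI)
      define \<chi> where "\<chi> v = (if j \<le> v then even (v - j) else even (v + c + 1 - j))" for v
      have "\<forall>i<m. \<chi> (f i) \<noteq> \<chi> (f (Suc i mod m))"
      proof (intro allI impI)
        fix i assume i: "i < m"
        have i2: "Suc i mod m < m" using m3 by simp
        define u where "u = f i"
        define v where "v = f (Suc i mod m)"
        have uv: "u \<le> c" "v \<le> c" "u \<noteq> j" "v \<noteq> j" using C i i2 j unfolding u_def v_def by auto
        have "Hg n c p u v" using edge i unfolding u_def v_def by simp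
        then have "Cy c u v" using uv unfolding Hg_def Kp_def by auto
        then have "u = Suc v \<or> v = Suc u \<or> (u = 0 \<and> v = c) \<or> (u = c \<and> v = 0)" unfolding Cy_def by simp
        then show "\<chi> (f i) \<noteq> \<chi> (f (Suc i mod m))"
          unfolding u_def[symmetric] v_def[symmetric] \<chi>_def using uv c2 j(1)
          by (elim disjE) (simp_all split: if_split; presburger)+
      qed
      from cycle_even[of m \<chi> f, OF this] m3 have "even m" by linarith
      then show False using odd by simp
    qed
  next
    case M
    then obtain i i' where i: "i < m" "f i < c" and i': "i' < m" "c < f i'" by blast
    define idx where "idx r = (if i + r < m then i + r else i + r - m)" for r
    define g where "g r = f (idx r)" for r
    have idx_lt: "idx r < m" if "r < m" for r using that i unfolding idx_def by auto
    have idx_inj: "idx r \<noteq> idx r'" if "r < m" "r' < m" "r \<noteq> r'" for r r'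
      using that i unfolding idx_def by auto
    have gadj: "Hg n c p (g r) (g (Suc r))" if "r < m" for r
    proof -
      have "Suc (idx r) mod m = idx (Suc r)"
      proof (cases "Suc (idx r) < m")
        case True
        then show ?thesis using that i unfolding idx_def by (auto split: if_splits)
      next
        case False
        then have "Suc (idx r) = m" using idx_lt[OF that] by simp
        then show ?thesis using that i unfolding idx_def by (auto split: if_splits)
      qed
      then show ?thesis using edge idx_lt[OF that] unfolding g_def by metis
    qed
    have noXY: "\<not> (u < c \<and> c < v)" if "Hg n c p u v" for u v
      using that unfolding Hg_def Kp_def Cy_def by auto
    have noYX: "\<not> (c < u \<and> v < c)" if "Hg n c p u v" for u v
      using that unfolding Hg_def Kp_def Cy_def by auto
    define s where "s = (if i \<le> i' then i' - i else i' + m - i)"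
    have s: "s < m" "idx s = i'" using i i' unfolding s_def idx_def by auto
    have "i \<noteq> i'" using i i' by auto
    then have s0: "0 < s" using i i' unfolding s_def by auto
    have g0: "g 0 = f i" using i unfolding g_def idx_def by simp
    have gm: "g m = f i" using i unfolding g_def idx_def by simp
    have gs: "g s = f i'" using s unfolding g_def by simp
    have adjXY: "\<forall>r<m. \<not> (g r < c \<and> c < g (Suc r))" using gadj noXY by blast
    have adjYX: "\<forall>r<m. \<not> (c < g r \<and> g (Suc r) < c)" using gadj noYX by blast
    have cover: "\<forall>r\<le>m. g r < c \<or> c < g r \<or> g r = c" by auto
    have "\<exists>r. 0 < r \<and> r < s \<and> g r = c"
      by (rule walk_hub[of m "\<lambda>v. v < c" g "\<lambda>v. c < v" c 0 s, OF adjXY cover])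
        (use s s0 g0 gs i i' in auto)
    then obtain r where r: "0 < r" "r < s" "g r = c" by blast
    have "\<exists>r. s < r \<and> r < m \<and> g r = c"
      by (rule walk_hub[of m "\<lambda>v. c < v" g "\<lambda>v. v < c" c s m, OF adjYX])
        (use cover s s0 gm gs i i' in auto)
    then obtain r' where r': "s < r'" "r' < m" "g r' = c" by blast
    have "idx r \<noteq> idx r'" using r r' s by (intro idx_inj) auto
    moreover have "f (idx r) = f (idx r')" using r r' unfolding g_def by simp
    ultimately show ?thesis using inj idx_lt r r' s by (meson atLeastLessThan_iff inj_onD le0 order.strict_trans)
  qed
qed

lemma H_clk:
  assumes "1 \<le> l" "l < k" "2 \<le> 2 * l" "2 * l < p"
  shows "Clk_free l k n (Hg n (2 * l) p)"
  unfolding Clk_free_def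
proof (intro conjI allI impI notI)
  fix i assume "1 \<le> i \<and> i \<le> l - 1" "has_cycle n (Hg n (2 * l) p) (2 * i + 1)"
  then have "2 * i + 1 = Suc (2 * l)" using H_cycle_len assms by simp
  then show False using \<open>1 \<le> i \<and> i \<le> l - 1\<close> by arith
next
  assume "has_cycle n (Hg n (2 * l) p) (2 * k + 1)"
  then have "2 * k + 1 = Suc (2 * l)" using H_cycle_len assms by simp
  then show False using assms by simp
qed


lemma sum_upper_if:
  assumes "p \<le> n"
  shows "(\<Sum>v<n. if p \<le> v then x else 0) = real (n - p) * (x::real)"
proof -
  have "(\<Sum>v<n. if p \<le> v then x else 0) = (\<Sum>v\<in>{..<n} \<inter> {v. p \<le> v}. x)"
    by (simp add: sum.If_cases)
  also have "{..<n} \<inter> {v. p \<le> v} = {p..<n}" by auto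
  finally show ?thesis by simp
qed

lemma sum_mid_if:
  assumes "p \<le> n"
  shows "(\<Sum>v<n. if c \<le> v \<and> v < p then x else 0) = real (p - c) * (x::real)"
proof -
  have "(\<Sum>v<n. if c \<le> v \<and> v < p then x else 0) = (\<Sum>v\<in>{..<n} \<inter> {v. c \<le> v \<and> v < p}. x)"
    by (simp add: sum.If_cases)
  also have "{..<n} \<inter> {v. c \<le> v \<and> v < p} = {c..<p}" using assms by auto
  finally show ?thesis by simp
qed

lemma sum_delta_if:
  assumes "w < (n::nat)"
  shows "(\<Sum>v<n. if v = w then x else 0) = (x::real)"
  using assms by (simp add: sum.delta)

lemma H_spec:
  assumes c2: "2 \<le> c" and cp: "c < p" and pn: "p < n"
  shows "sqrt (real (p - c) * real (n - p)) < spec_rad n (Hg n c p)"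
proof -
  define a where "a = real (p - c)"
  define b where "b = real (n - p)"
  define s where "s = sqrt a"
  define r where "r = sqrt b"
  have a1: "a \<ge> 1" unfolding a_def using cp by simp
  have b1: "b \<ge> 1" unfolding b_def using pn by simp
  have sp: "s > 0" and rp: "r > 0" unfolding s_def r_def using a1 b1 by auto
  have ss: "s * s = a" unfolding s_def using a1 by simp
  have rr: "r * r = b" unfolding r_def using b1 by simp
  define y where "y u = (if u = 0 then 1 / s else if u < c then 0 else if u < p then r else if u < n then s else 0)" for u
  define R where "R u = (\<Sum>v<n. (if Hg n c p u v then 1 else 0) * y v)" for u
  have y1: "y v = 0" if "0 < v" "v < c" for v using that unfolding y_def by auto
  have R0: "R 0 = r"
  proof -
    have "R 0 = (\<Sum>v<n. if v = c then r else 0)" unfolding R_def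
    proof (intro sum.cong refl)
      fix v assume "v \<in> {..<n}"
      show "(if Hg n c p 0 v then 1 else 0) * y v = (if v = c then r else 0)"
        using c2 cp y1[of v] unfolding Hg_def Kp_def Cy_def by (auto simp: y_def)
    qed
    also have "\<dots> = r" using cp pn by (simp add: sum.delta)
    finally show ?thesis .
  qed
  have Rc: "R c = b * s + 1 / s"
  proof -
    have "R c = (\<Sum>v<n. (if p \<le> v then s else 0) + (if v = 0 then 1 / s else 0))" unfolding R_def
    proof (intro sum.cong refl)
      fix v assume "v \<in> {..<n}"
      then show "(if Hg n c p c v then 1 else 0) * y v = (if p \<le> v then s else 0) + (if v = 0 then 1 / s else 0)"
        using c2 cp y1[of v] unfolding Hg_def Kp_def Cy_def by (auto simp: y_def)
    qed
    also have "\<dots> = b * s + 1 / s"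
      using sum_upper_if[of p n s] pn unfolding b_def by (simp add: sum.distrib sum.delta)
    finally show ?thesis .
  qed
  have RA: "R u = b * s" if "c < u" "u < p" for u
  proof -
    have "R u = (\<Sum>v<n. if p \<le> v then s else 0)" unfolding R_def
    proof (intro sum.cong refl)
      fix v assume "v \<in> {..<n}"
      then show "(if Hg n c p u v then 1 else 0) * y v = (if p \<le> v then s else 0)"
        using that c2 cp y1[of v] unfolding Hg_def Kp_def Cy_def by (auto simp: y_def)
    qed
    also have "\<dots> = b * s" using sum_upper_if[of p n s] pn unfolding b_def by simp
    finally show ?thesis .
  qed
  have RB: "R u = a * r" if "p \<le> u" "u < n" for u
  proof -
    have "R u = (\<Sum>v<n. if c \<le> v \<and> v < p then r else 0)" unfolding R_def
    proof (intro sum.cong refl)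
      fix v assume "v \<in> {..<n}"
      then show "(if Hg n c p u v then 1 else 0) * y v = (if c \<le> v \<and> v < p then r else 0)"
        using that c2 cp y1[of v] unfolding Hg_def Kp_def Cy_def by (auto simp: y_def)
    qed
    also have "\<dots> = a * r" using sum_mid_if[of p n c r] pn unfolding a_def by simp
    finally show ?thesis .
  qed
  have Qeq: "(\<Sum>i<n. \<Sum>j<n. (if Hg n c p i j then 1 else 0) * y i * y j) = (\<Sum>u<n. y u * R u)"
    unfolding R_def by (simp add: sum_distrib_left mult.assoc mult.left_commute)
  have "(\<Sum>u<n. y u * R u) = (\<Sum>u<n. (if u = 0 then r / s else 0) + (if u = c then r / s else 0)
        + (if c \<le> u \<and> u < p then r * (b * s) else 0) + (if p \<le> u then s * (a * r) else 0))"
  proof (intro sum.cong refl)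
    fix u assume u: "u \<in> {..<n}"
    consider "u = 0" | "0 < u \<and> u < c" | "u = c" | "c < u \<and> u < p" | "p \<le> u" by linarith
    then show "y u * R u = (if u = 0 then r / s else 0) + (if u = c then r / s else 0)
        + (if c \<le> u \<and> u < p then r * (b * s) else 0) + (if p \<le> u then s * (a * r) else 0)"
    proof cases
      case 1 then show ?thesis using R0 c2 cp unfolding y_def by simp
    next
      case 2 then show ?thesis using y1[of u] cp by simp
    next
      case 3 then show ?thesis using Rc c2 cp sp unfolding y_def by (simp add: algebra_simps)
    next
      case 4 then show ?thesis using RA[of u] c2 cp unfolding y_def by simp
    next
      case 5 then show ?thesis using RB[of u] u c2 cp unfolding y_def by simp
    qed
  qed
  also have "\<dots> = r / s + r / s + a * (r * (b * s)) + b * (s * (a * r))"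
    using sum_upper_if[of p n "s * (a * r)"] sum_mid_if[of p n c "r * (b * s)"] pn cp c2
    unfolding a_def b_def by (simp add: sum.distrib sum.delta)
  finally have Q: "(\<Sum>i<n. \<Sum>j<n. (if Hg n c p i j then 1 else 0) * y i * y j) = 2 * (r / s) + 2 * (a * b * (r * s))"
    using Qeq by (simp add: algebra_simps)
  have "(\<Sum>u<n. (y u)^2) = (\<Sum>u<n. (if u = 0 then 1 / a else 0)
        + (if c \<le> u \<and> u < p then b else 0) + (if p \<le> u then a else 0))"
  proof (intro sum.cong refl)
    fix u assume u: "u \<in> {..<n}"
    consider "u = 0" | "0 < u \<and> u < c" | "c \<le> u \<and> u < p" | "p \<le> u" by linarith
    then show "(y u)^2 = (if u = 0 then 1 / a else 0)
        + (if c \<le> u \<and> u < p then b else 0) + (if p \<le> u then a else 0)"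
    proof cases
      case 1 then show ?thesis using c2 cp ss unfolding y_def by (simp add: power2_eq_square)
    next
      case 2 then show ?thesis using y1[of u] cp by simp
    next
      case 3 then show ?thesis using c2 rr unfolding y_def by (simp add: power2_eq_square)
    next
      case 4 then show ?thesis using u c2 cp ss unfolding y_def by (simp add: power2_eq_square)
    qed
  qed
  also have "\<dots> = 1 / a + a * b + b * a"
    using sum_upper_if[of p n a] sum_mid_if[of p n c b] pn cp c2
    unfolding a_def b_def by (simp add: sum.distrib sum.delta)
  finally have N: "(\<Sum>u<n. (y u)^2) = 1 / a + 2 * (a * b)" by simp
  have npos: "0 < n" using pn by simp
  have sH: "simple_graph n (Hg n c p)" using H_simple c2 cp pn by simp
  have ray: "2 * (r / s) + 2 * (a * b * (r * s)) \<le> spec_rad n (Hg n c p) * (1 / a + 2 * (a * b))"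
    using rayleigh[OF npos sH, of y] Q N by simp
  have "r * s * (1 / a + 2 * (a * b)) = r / s + 2 * (a * b * (r * s))"
    using sp ss a1 by (simp add: field_simps)
  then have "r * s * (1 / a + 2 * (a * b)) < spec_rad n (Hg n c p) * (1 / a + 2 * (a * b))"
    using ray sp rp by (smt (verit) divide_pos_pos)
  moreover have "1 / a + 2 * (a * b) > 0" using a1 b1 by (simp add: add_pos_pos)
  ultimately have "r * s < spec_rad n (Hg n c p)" by (simp add: mult_less_cancel_right)
  moreover have "r * s = sqrt (real (p - c) * real (n - p))"
    unfolding r_def s_def a_def b_def by (simp add: real_sqrt_mult)
  ultimately show ?thesis by simp
qed


definition ind :: "(nat \<Rightarrow> nat \<Rightarrow> bool) \<Rightarrow> nat \<Rightarrow> nat \<Rightarrow> real" where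
  "ind E u v = (if E u v then 1 else 0)"

lemma ind_sym: "simple_graph n E \<Longrightarrow> ind E u v = ind E v u"
  unfolding ind_def simple_graph_def by metis

lemma ind_01: "ind E u v = 0 \<or> ind E u v = 1"
  unfolding ind_def by simp

lemma ind_ge0: "ind E u v \<ge> 0"
  unfolding ind_def by simp

lemma card_filter_sum:
  assumes "finite A"
  shows "real (card {x\<in>A. P x}) = (\<Sum>x\<in>A. if P x then 1 else 0)"
  using sum.inter_filter[OF assms, of "\<lambda>_. (1::real)" P] by simp

lemma edges_sum:
  assumes "simple_graph n E"
  shows "(\<Sum>u<n. \<Sum>w<n. ind E u w) = 2 * real (num_edges n E)"
proof -
  have set_eq: "{(u, v). u < v \<and> v < n \<and> E u v} = Sigma {..<n} (\<lambda>u. {v\<in>{..<n}. u < v \<and> E u v})"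
    by auto
  have "real (num_edges n E) = (\<Sum>u<n. real (card {v\<in>{..<n}. u < v \<and> E u v}))"
    unfolding num_edges_def set_eq by (subst card_SigmaI) auto
  also have "\<dots> = (\<Sum>u<n. \<Sum>w<n. if u < w \<and> E u w then 1 else 0)"
    by (intro sum.cong refl card_filter_sum) auto
  finally have ne: "real (num_edges n E) = (\<Sum>u<n. \<Sum>w<n. if u < w \<and> E u w then 1 else 0)" .
  have "(\<Sum>u<n. \<Sum>w<n. ind E u w) = (\<Sum>u<n. \<Sum>w<n. (if u < w \<and> E u w then 1 else 0) + (if w < u \<and> E u w then 1 else 0))"
  proof (intro sum.cong refl)
    fix u w
    have "E u w \<Longrightarrow> u \<noteq> w" using assms unfolding simple_graph_def by blast
    then show "ind E u w = (if u < w \<and> E u w then 1 else 0) + (if w < u \<and> E u w then 1 else 0)"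
      unfolding ind_def by (auto simp: linorder_neq_iff)
  qed
  also have "\<dots> = (\<Sum>u<n. \<Sum>w<n. if u < w \<and> E u w then 1 else 0) + (\<Sum>u<n. \<Sum>w<n. if w < u \<and> E u w then 1 else 0)"
    by (simp add: sum.distrib)
  also have "(\<Sum>u<n. \<Sum>w<n. if w < u \<and> E u w then 1 else (0::real)) = (\<Sum>u<n. \<Sum>w<n. if u < w \<and> E u w then 1 else 0)"
    using simple_sym[OF assms] by (subst sum.swap) simp
  finally show ?thesis using ne by simp
qed

lemma D_bound:
  assumes "simple_graph n E"
  shows "2 * (\<Sum>u<n. ind E z u * (\<Sum>w<n. ind E u w))
     \<le> 2 * real (num_edges n E) + (\<Sum>u<n. \<Sum>w<n. ind E u w * ind E z u * ind E z w)"
proof -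
  have s1: "(\<Sum>u<n. ind E z u * (\<Sum>w<n. ind E u w)) = (\<Sum>u<n. \<Sum>w<n. ind E u w * ind E z u)"
  proof (intro sum.cong refl)
    fix u
    have "ind E z u * (\<Sum>w<n. ind E u w) = (\<Sum>w<n. ind E z u * ind E u w)"
      by (rule sum_distrib_left)
    also have "\<dots> = (\<Sum>w<n. ind E u w * ind E z u)"
      by (intro sum.cong refl) (rule mult.commute)
    finally show "ind E z u * (\<Sum>w<n. ind E u w) = (\<Sum>w<n. ind E u w * ind E z u)" .
  qed
  have "(\<Sum>u<n. \<Sum>w<n. ind E u w * ind E z u) = (\<Sum>w<n. \<Sum>u<n. ind E u w * ind E z u)"
    by (rule sum.swap)
  also have "\<dots> = (\<Sum>u<n. \<Sum>w<n. ind E u w * ind E z w)"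
  proof (intro sum.cong refl)
    fix u w show "ind E w u * ind E z w = ind E u w * ind E z w"
      using ind_sym[OF assms, of w u] by simp
  qed
  finally have s2: "(\<Sum>u<n. ind E z u * (\<Sum>w<n. ind E u w)) = (\<Sum>u<n. \<Sum>w<n. ind E u w * ind E z w)"
    using s1 by simp
  have "2 * (\<Sum>u<n. ind E z u * (\<Sum>w<n. ind E u w)) = (\<Sum>u<n. \<Sum>w<n. ind E u w * ind E z u) + (\<Sum>u<n. \<Sum>w<n. ind E u w * ind E z w)"
    using s1 s2 by simp
  also have "\<dots> = (\<Sum>u<n. \<Sum>w<n. ind E u w * ind E z u + ind E u w * ind E z w)"
    by (simp add: sum.distrib)
  also have "\<dots> = (\<Sum>u<n. \<Sum>w<n. ind E u w * (ind E z u + ind E z w))"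
    by (intro sum.cong refl) (rule distrib_left[symmetric])
  also have "\<dots> \<le> (\<Sum>u<n. \<Sum>w<n. ind E u w + ind E u w * ind E z u * ind E z w)"
  proof (intro sum_mono)
    fix u w
    have "ind E z u + ind E z w \<le> 1 + ind E z u * ind E z w"
      using ind_01[of E z u] ind_01[of E z w] by auto
    then have "ind E u w * (ind E z u + ind E z w) \<le> ind E u w * (1 + ind E z u * ind E z w)"
      by (intro mult_left_mono ind_ge0)
    then show "ind E u w * (ind E z u + ind E z w) \<le> ind E u w + ind E u w * ind E z u * ind E z w"
      by (simp add: algebra_simps)
  qed
  also have "\<dots> = 2 * real (num_edges n E) + (\<Sum>u<n. \<Sum>w<n. ind E u w * ind E z u * ind E z w)"
    using edges_sum[OF assms] by (simp add: sum.distrib)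
  finally show ?thesis .
qed

lemma nosal:
  assumes sg: "simple_graph n E"
    and ev: "\<forall>u<n. (\<Sum>v<n. ind E u v * x v) = lam * x u"
    and nz: "\<exists>i<n. x i \<noteq> 0"
    and PB: "\<forall>z<n. (\<Sum>u<n. \<Sum>w<n. ind E u w * ind E z u * ind E z w) \<le> B"
  shows "lam^2 \<le> real (num_edges n E) + B / 2"
proof -
  define deg where "deg u = (\<Sum>w<n. ind E u w)" for u
  define NB where "NB u = {v\<in>{..<n}. E u v}" for u
  have degc: "deg u = real (card (NB u))" for u
    unfolding deg_def NB_def ind_def using card_filter_sum[of "{..<n}" "E u"] by simp
  have sumNB: "(\<Sum>v<n. ind E u v * f v) = (\<Sum>v\<in>NB u. f v)" for u f
  proof -
    have "(\<Sum>v<n. ind E u v * f v) = (\<Sum>v<n. if E u v then f v else 0)"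
      by (intro sum.cong) (auto simp: ind_def)
    also have "\<dots> = (\<Sum>v\<in>NB u. f v)" unfolding NB_def by (rule sum.inter_filter[symmetric]) simp
    finally show ?thesis .
  qed
  have cs: "(lam * x u)^2 \<le> deg u * (\<Sum>v<n. ind E u v * (x v)^2)" if "u < n" for u
  proof -
    have "(lam * x u)^2 = (\<Sum>v\<in>NB u. x v)^2" using ev that sumNB[of u x] by simp
    also have "\<dots> \<le> real (card (NB u)) * (\<Sum>v\<in>NB u. (x v)^2)"
      by (rule sum_sq_le_card) (simp add: NB_def)
    also have "\<dots> = deg u * (\<Sum>v<n. ind E u v * (x v)^2)"
      using degc sumNB[of u "\<lambda>v. (x v)^2"] by simp
    finally show ?thesis .
  qed
  have "lam^2 * (\<Sum>u<n. (x u)^2) = (\<Sum>u<n. (lam * x u)^2)"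
    by (simp add: sum_distrib_left power_mult_distrib)
  also have "\<dots> \<le> (\<Sum>u<n. deg u * (\<Sum>v<n. ind E u v * (x v)^2))"
    using cs by (intro sum_mono) auto
  also have "\<dots> = (\<Sum>u<n. \<Sum>v<n. deg u * ind E u v * (x v)^2)"
    by (intro sum.cong refl) (simp add: sum_distrib_left mult.assoc)
  also have "\<dots> = (\<Sum>v<n. \<Sum>u<n. deg u * ind E u v * (x v)^2)"
    by (rule sum.swap)
  also have "\<dots> = (\<Sum>v<n. (x v)^2 * (\<Sum>u<n. ind E v u * deg u))"
  proof (intro sum.cong refl)
    fix v
    have "(\<Sum>u<n. deg u * ind E u v * (x v)^2) = (\<Sum>u<n. (x v)^2 * (ind E v u * deg u))"
    proof (intro sum.cong refl)
      fix u show "deg u * ind E u v * (x v)^2 = (x v)^2 * (ind E v u * deg u)"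
        using ind_sym[OF sg, of u v] by simp
    qed
    then show "(\<Sum>u<n. deg u * ind E u v * (x v)^2) = (x v)^2 * (\<Sum>u<n. ind E v u * deg u)"
      by (simp add: sum_distrib_left)
  qed
  also have "\<dots> \<le> (\<Sum>v<n. (x v)^2 * (real (num_edges n E) + B / 2))"
  proof (intro sum_mono mult_left_mono)
    fix v assume v: "v \<in> {..<n}"
    have "(\<Sum>u<n. \<Sum>w<n. ind E u w * ind E v u * ind E v w) \<le> B" using PB v by simp
    then have "2 * (\<Sum>u<n. ind E v u * deg u) \<le> 2 * real (num_edges n E) + B"
      using D_bound[OF sg, of v] unfolding deg_def by linarith
    then show "(\<Sum>u<n. ind E v u * deg u) \<le> real (num_edges n E) + B / 2" by simp
  qed simp
  also have "\<dots> = (\<Sum>v<n. (x v)^2) * (real (num_edges n E) + B / 2)"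
    by (rule sum_distrib_right[symmetric])
  finally have le: "lam^2 * (\<Sum>u<n. (x u)^2) \<le> (\<Sum>v<n. (x v)^2) * (real (num_edges n E) + B / 2)" .
  obtain i where i: "i < n" "x i \<noteq> 0" using nz by blast
  have "0 < (x i)^2" using i by simp
  also have "\<dots> \<le> (\<Sum>v<n. (x v)^2)" using i by (intro member_le_sum) auto
  finally have "0 < (\<Sum>v<n. (x v)^2)" .
  moreover have "(\<Sum>v<n. (x v)^2) * lam^2 \<le> (\<Sum>v<n. (x v)^2) * (real (num_edges n E) + B / 2)"
    using le by (simp only: mult.commute)
  ultimately show ?thesis using mult_le_cancel_left_pos by blast
qed


definition is_path :: "(nat \<Rightarrow> nat \<Rightarrow> bool) \<Rightarrow> nat set \<Rightarrow> nat list \<Rightarrow> bool" where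
  "is_path F S ps \<longleftrightarrow> distinct ps \<and> set ps \<subseteq> S \<and> (\<forall>i. Suc i < length ps \<longrightarrow> F (ps ! i) (ps ! Suc i))"

lemma is_path_take: "is_path F S ps \<Longrightarrow> is_path F S (take k ps)"
  unfolding is_path_def by (auto dest: in_set_takeD)

lemma is_path_mono: "S \<subseteq> S' \<Longrightarrow> is_path F S ps \<Longrightarrow> is_path F S' ps"
  unfolding is_path_def by auto

lemma is_path_len: "finite S \<Longrightarrow> is_path F S ps \<Longrightarrow> length ps \<le> card S"
  unfolding is_path_def by (metis card_mono distinct_card)

lemma is_path_cons:
  assumes "is_path F S ps" "ps \<noteq> []" "z \<in> S" "z \<notin> set ps" "F z (ps ! 0)"
  shows "is_path F S (z # ps)"
  unfolding is_path_def
proof (intro conjI allI impI)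
  show "distinct (z # ps)" using assms unfolding is_path_def by simp
  show "set (z # ps) \<subseteq> S" using assms unfolding is_path_def by simp
  fix i assume "Suc i < length (z # ps)"
  then show "F ((z # ps) ! i) ((z # ps) ! Suc i)"
    using assms unfolding is_path_def by (cases i) auto
qed

lemma is_path_snoc:
  assumes "is_path F S ps" "ps \<noteq> []" "z \<in> S" "z \<notin> set ps" "F (ps ! (length ps - 1)) z"
  shows "is_path F S (ps @ [z])"
  unfolding is_path_def
proof (intro conjI allI impI)
  show "distinct (ps @ [z])" using assms unfolding is_path_def by simp
  show "set (ps @ [z]) \<subseteq> S" using assms unfolding is_path_def by simp
  fix i assume i: "Suc i < length (ps @ [z])"
  show "F ((ps @ [z]) ! i) ((ps @ [z]) ! Suc i)"
  proof (cases "Suc i < length ps")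
    case True
    then show ?thesis using assms unfolding is_path_def by (simp add: nth_append)
  next
    case False
    then have "i = length ps - 1" "Suc i = length ps" using i by auto
    then show ?thesis using assms by (simp add: nth_append)
  qed
qed

lemma sum_if_card: "finite A \<Longrightarrow> (\<Sum>w\<in>A. if P w then 1 else 0) = card {w\<in>A. P w}"
  using sum.inter_filter[of A "\<lambda>_. (1::nat)" P] by simp

lemma remove_vertex:
  assumes fin: "finite S" and u: "u \<in> S" and sym: "\<forall>a b. F a b \<longrightarrow> F b a" and irr: "\<forall>a. \<not> F a a"
  shows "(\<Sum>w\<in>S. card {z\<in>S. F w z}) = 2 * card {z\<in>S. F u z} + (\<Sum>w\<in>S-{u}. card {z\<in>S-{u}. F w z})"
proof -
  have "(\<Sum>w\<in>S. card {z\<in>S. F w z}) = card {z\<in>S. F u z} + (\<Sum>w\<in>S-{u}. card {z\<in>S. F w z})"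
    using fin u by (rule sum.remove)
  also have "(\<Sum>w\<in>S-{u}. card {z\<in>S. F w z}) = (\<Sum>w\<in>S-{u}. card {z\<in>S-{u}. F w z} + (if F w u then 1 else 0))"
  proof (intro sum.cong refl)
    fix w assume w: "w \<in> S - {u}"
    show "card {z\<in>S. F w z} = card {z\<in>S-{u}. F w z} + (if F w u then 1 else 0)"
    proof (cases "F w u")
      case True
      then have "{z\<in>S. F w z} = insert u {z\<in>S-{u}. F w z}" using u by auto
      then show ?thesis using True fin by simp
    next
      case False
      then have "{z\<in>S. F w z} = {z\<in>S-{u}. F w z}" by auto
      then show ?thesis using False by simp
    qed
  qed
  also have "\<dots> = (\<Sum>w\<in>S-{u}. card {z\<in>S-{u}. F w z}) + card {w\<in>S-{u}. F w u}"
    using fin by (simp add: sum.distrib sum_if_card)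
  also have "{w\<in>S-{u}. F w u} = {z\<in>S. F u z}" using sym irr by blast
  finally show ?thesis by simp
qed

lemma split_comp:
  assumes fin: "finite S" and T: "T \<subseteq> S" and noe: "\<forall>w\<in>T. \<forall>z\<in>S-T. \<not> F w z"
    and sym: "\<forall>a b. F a b \<longrightarrow> F b a"
  shows "(\<Sum>w\<in>S. card {z\<in>S. F w z}) = (\<Sum>w\<in>T. card {z\<in>T. F w z}) + (\<Sum>w\<in>S-T. card {z\<in>S-T. F w z})"
proof -
  have "(\<Sum>w\<in>S. card {z\<in>S. F w z}) = (\<Sum>w\<in>S-T. card {z\<in>S. F w z}) + (\<Sum>w\<in>T. card {z\<in>S. F w z})"
    by (rule sum.subset_diff[OF T fin])
  also have "(\<Sum>w\<in>T. card {z\<in>S. F w z}) = (\<Sum>w\<in>T. card {z\<in>T. F w z})"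
  proof (intro sum.cong refl)
    fix w assume "w \<in> T"
    then have "{z\<in>S. F w z} = {z\<in>T. F w z}" using noe T by blast
    then show "card {z\<in>S. F w z} = card {z\<in>T. F w z}" by simp
  qed
  also have "(\<Sum>w\<in>S-T. card {z\<in>S. F w z}) = (\<Sum>w\<in>S-T. card {z\<in>S-T. F w z})"
  proof (intro sum.cong refl)
    fix w assume "w \<in> S - T"
    then have "{z\<in>S. F w z} = {z\<in>S-T. F w z}" using noe sym by blast
    then show "card {z\<in>S. F w z} = card {z\<in>S-T. F w z}" by simp
  qed
  finally show ?thesis by simp
qed

lemma EG:
  fixes F :: "nat \<Rightarrow> nat \<Rightarrow> bool" and t :: nat
  assumes sym: "\<forall>a b. F a b \<longrightarrow> F b a" and irr: "\<forall>a. \<not> F a a" and t2: "2 \<le> t"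
  shows "finite S \<Longrightarrow> \<not> (\<exists>ps. is_path F S ps \<and> length ps = t)
     \<Longrightarrow> (\<Sum>w\<in>S. card {z\<in>S. F w z}) \<le> (t - 2) * card S"
proof (induction "card S" arbitrary: S rule: less_induct)
  case less
  note fin = less.prems(1) and nop = less.prems(2)
  show ?case
  proof (cases "S = {}")
    case True then show ?thesis by simp
  next
    case False
    then obtain s where s: "s \<in> S" by blast
    define L where "L = length ` {ps. is_path F S ps}"
    have s_path: "is_path F S [s]" using s unfolding is_path_def by simp
    have "L \<subseteq> {..card S}" unfolding L_def using is_path_len[OF fin] by auto
    then have Lfin: "finite L" by (rule finite_subset) simp
    have L1: "1 \<in> L" using s_path unfolding L_def by force
    then have "Max L \<in> L" using Lfin by (intro Max_in) auto
    then obtain ps where ps: "is_path F S ps" "length ps = Max L" unfolding L_def by auto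
    have maxl: "length qs \<le> length ps" if "is_path F S qs" for qs
      using that Lfin ps(2) unfolding L_def by (metis Max_ge image_eqI mem_Collect_eq)
    define p where "p = length ps"
    have p1: "1 \<le> p" using maxl[OF s_path] unfolding p_def by simp
    have pt: "p < t"
    proof (rule ccontr)
      assume "\<not> p < t"
      then have "is_path F S (take t ps) \<and> length (take t ps) = t"
        using is_path_take[OF ps(1)] unfolding p_def by simp
      then show False using nop by blast
    qed
    have dps: "distinct ps" and sps: "set ps \<subseteq> S" and aps: "\<And>i. Suc i < p \<Longrightarrow> F (ps ! i) (ps ! Suc i)"
      using ps(1) unfolding is_path_def p_def by auto
    have pne: "ps \<noteq> []" using p1 unfolding p_def by auto
    define v0 where "v0 = ps ! 0"
    define v1 where "v1 = ps ! (p - 1)"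
    have "0 < length ps" using p1 unfolding p_def by linarith
    then have "ps ! 0 \<in> set ps" by (rule nth_mem)
    then have v0S: "v0 \<in> S" unfolding v0_def using sps by blast
    have "p - 1 < length ps" using p1 unfolding p_def by linarith
    then have "ps ! (p - 1) \<in> set ps" by (rule nth_mem)
    then have v1S: "v1 \<in> S" unfolding v1_def using sps by blast
    have M1: "z \<in> set ps" if "z \<in> S" "F v0 z" for z
    proof (rule ccontr)
      assume "z \<notin> set ps"
      then have "is_path F S (z # ps)"
        using is_path_cons[OF ps(1) pne that(1)] sym that(2) unfolding v0_def by blast
      then have "length (z # ps) \<le> length ps" by (rule maxl)
      then show False by simp
    qed
    have M2: "z \<in> set ps" if "z \<in> S" "F v1 z" for z
    proof (rule ccontr)
      assume "z \<notin> set ps"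
      then have "is_path F S (ps @ [z])"
        using is_path_snoc[OF ps(1) pne that(1)] that(2) unfolding v1_def p_def by blast
      then have "length (ps @ [z]) \<le> length ps" by (rule maxl)
      then show False by simp
    qed
    define X where "X = {i. Suc i < p \<and> F v0 (ps ! Suc i)}"
    define Y where "Y = {i. Suc i < p \<and> F v1 (ps ! i)}"
    have Xsub: "X \<subseteq> {..<p-1}" and Ysub: "Y \<subseteq> {..<p-1}" unfolding X_def Y_def by auto
    have finX: "finite X" and finY: "finite Y" using Xsub Ysub finite_subset by auto
    have N0: "{z\<in>S. F v0 z} \<subseteq> (\<lambda>i. ps ! Suc i) ` X"
    proof
      fix z assume z: "z \<in> {z\<in>S. F v0 z}"
      then have "z \<in> set ps" using M1 by blast
      then obtain k where k: "k < p" "z = ps ! k" unfolding p_def by (metis in_set_conv_nth)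
      have "k \<noteq> 0"
      proof
        assume "k = 0" then show False using z k irr unfolding v0_def by auto
      qed
      then have "Suc (k - 1) = k" by simp
      then have "k - 1 \<in> X" "z = ps ! Suc (k - 1)" using k z unfolding X_def by auto
      then show "z \<in> (\<lambda>i. ps ! Suc i) ` X" by blast
    qed
    have N1: "{z\<in>S. F v1 z} \<subseteq> (\<lambda>i. ps ! i) ` Y"
    proof
      fix z assume z: "z \<in> {z\<in>S. F v1 z}"
      then have "z \<in> set ps" using M2 by blast
      then obtain k where k: "k < p" "z = ps ! k" unfolding p_def by (metis in_set_conv_nth)
      have "k \<noteq> p - 1"
      proof
        assume "k = p - 1" then show False using z k irr unfolding v1_def by auto
      qed
      then have "Suc k < p" using k by simp
      then have "k \<in> Y" using k z unfolding Y_def by auto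
      then show "z \<in> (\<lambda>i. ps ! i) ` Y" using k by blast
    qed
    have c0: "card {z\<in>S. F v0 z} \<le> card X"
      using card_mono[OF finite_imageI[OF finX] N0] card_image_le[OF finX, of "\<lambda>i. ps ! Suc i"] by linarith
    have c1: "card {z\<in>S. F v1 z} \<le> card Y"
      using card_mono[OF finite_imageI[OF finY] N1] card_image_le[OF finY, of "\<lambda>i. ps ! i"] by linarith
    show ?thesis
    proof (cases "X \<inter> Y = {}")
      case True
      have "card X + card Y = card (X \<union> Y)" using True finX finY by (simp add: card_Un_disjoint)
      also have "\<dots> \<le> card {..<p-1}" using Xsub Ysub by (intro card_mono) auto
      finally have "card X + card Y \<le> p - 1" by simp
      then have dsum: "card {z\<in>S. F v0 z} + card {z\<in>S. F v1 z} \<le> t - 2" using c0 c1 pt by linarith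
      obtain u where u: "u \<in> S" "2 * card {z\<in>S. F u z} \<le> t - 2"
      proof (cases "card {z\<in>S. F v0 z} \<le> card {z\<in>S. F v1 z}")
        case True then show ?thesis using that[of v0] v0S dsum by linarith
      next
        case False then show ?thesis using that[of v1] v1S dsum by linarith
      qed
      have cS: "card S = Suc (card (S - {u}))" using card_Suc_Diff1[OF fin u(1)] by simp
      have nop': "\<not> (\<exists>ps. is_path F (S - {u}) ps \<and> length ps = t)"
        using nop is_path_mono[of "S - {u}" S F] by blast
      have IH: "(\<Sum>w\<in>S-{u}. card {z\<in>S-{u}. F w z}) \<le> (t - 2) * card (S - {u})"
        using less.hyps[of "S - {u}"] cS fin nop' by simp
      have "(\<Sum>w\<in>S. card {z\<in>S. F w z}) = 2 * card {z\<in>S. F u z} + (\<Sum>w\<in>S-{u}. card {z\<in>S-{u}. F w z})"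
        using remove_vertex[OF fin u(1) sym irr] .
      also have "\<dots> \<le> (t - 2) + (t - 2) * card (S - {u})" using u IH by linarith
      also have "\<dots> = (t - 2) * card S" using cS by simp
      finally show ?thesis .
    next
      case False
      then obtain i where iX: "i \<in> X" and iY: "i \<in> Y" by blast
      have i1: "Suc i < p" "F v0 (ps ! Suc i)" "F v1 (ps ! i)" using iX iY unfolding X_def Y_def by auto
      define sg where "sg j = (if j \<le> i then j else p + i - j)" for j
      have sglt: "sg j < p" if "j < p" for j using that i1 unfolding sg_def by auto
      have sgsg: "sg (sg j) = j" if "j < p" for j using that i1 unfolding sg_def by auto
      define cyc where "cyc = map (\<lambda>j. ps ! sg j) [0..<p]"
      have lc: "length cyc = p" unfolding cyc_def by simp
      have cn: "cyc ! j = ps ! sg j" if "j < p" for j unfolding cyc_def using that by simp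
      have dc: "distinct cyc"
        unfolding distinct_conv_nth lc
      proof (intro allI impI)
        fix a b assume ab: "a < p" "b < p" "a \<noteq> b"
        show "cyc ! a \<noteq> cyc ! b"
        proof
          assume "cyc ! a = cyc ! b"
          then have "ps ! sg a = ps ! sg b" using cn ab by simp
          then have "sg a = sg b" using nth_eq_iff_index_eq[OF dps] sglt ab unfolding p_def by auto
          then have "sg (sg a) = sg (sg b)" by simp
          then show False using sgsg ab by simp
        qed
      qed
      have setc: "set cyc = set ps"
      proof
        show "set cyc \<subseteq> set ps"
        proof
          fix w assume "w \<in> set cyc"
          then obtain j where j: "j < p" "w = cyc ! j" using lc by (metis in_set_conv_nth)
          then have "w = ps ! sg j" using cn by simp
          then show "w \<in> set ps" using sglt[OF j(1)] unfolding p_def by simp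
        qed
        show "set ps \<subseteq> set cyc"
        proof
          fix w assume "w \<in> set ps"
          then obtain k where k: "k < p" "w = ps ! k" unfolding p_def by (metis in_set_conv_nth)
          then have "cyc ! sg k = w" using cn[OF sglt[OF k(1)]] sgsg by simp
          then show "w \<in> set cyc" using sglt[OF k(1)] lc by (metis nth_mem)
        qed
      qed
      have cadj: "F (cyc ! j) (cyc ! (Suc j mod p))" if j: "j < p" for j
      proof (cases "Suc j < p")
        case True
        then have sm: "Suc j mod p = Suc j" by simp
        consider "j < i" | "j = i" | "i < j" by linarith
        then show ?thesis
        proof cases
          case 1
          then have "sg j = j" "sg (Suc j) = Suc j" unfolding sg_def by auto
          then show ?thesis using sm cn j True aps[of j] by simp
        next
          case 2
          then have "sg j = i" "sg (Suc j) = p - 1" using i1 unfolding sg_def by auto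
          then show ?thesis using sm cn j True i1(3) sym unfolding v1_def by simp
        next
          case 3
          then have "sg j = Suc (p + i - Suc j)" "sg (Suc j) = p + i - Suc j" using True unfolding sg_def by auto
          moreover have "Suc (p + i - Suc j) < p" using 3 True by simp
          ultimately show ?thesis using sm cn j True aps[of "p + i - Suc j"] sym by simp
        qed
      next
        case False
        then have jp: "Suc j = p" using j by simp
        then have sm: "Suc j mod p = 0" by simp
        have "sg j = Suc i" "sg 0 = 0" using jp i1 unfolding sg_def by auto
        then show ?thesis using sm cn j p1 i1(2) sym unfolding v0_def by simp
      qed
      have noe: "\<forall>w\<in>set ps. \<forall>z\<in>S - set ps. \<not> F w z"
      proof (intro ballI notI)
        fix w z assume w: "w \<in> set ps" and z: "z \<in> S - set ps" and Fwz: "F w z"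
        obtain j where j: "j < p" "cyc ! j = w" using w setc lc by (metis in_set_conv_nth)
        define qs where "qs = z # rotate j cyc"
        have "is_path F S qs"
          unfolding is_path_def qs_def
        proof (intro conjI allI impI)
          show "distinct (z # rotate j cyc)" using z dc setc by simp
          show "set (z # rotate j cyc) \<subseteq> S" using z setc sps by auto
          fix r assume r: "Suc r < length (z # rotate j cyc)"
          then have rp: "r < p" using lc by simp
          show "F ((z # rotate j cyc) ! r) ((z # rotate j cyc) ! Suc r)"
          proof (cases r)
            case 0
            have "rotate j cyc ! 0 = cyc ! j" using j lc by (simp add: nth_rotate)
            then show ?thesis using 0 j Fwz sym by simp
          next
            case (Suc r')
            then have r'p: "Suc r' < p" using rp by simp
            have "rotate j cyc ! r' = cyc ! ((r' + j) mod p)" using r'p lc by (simp add: nth_rotate add.commute)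
            moreover have "rotate j cyc ! Suc r' = cyc ! (Suc ((r' + j) mod p) mod p)"
              using r'p lc by (simp add: nth_rotate mod_Suc_eq add.commute)
            moreover have "(r' + j) mod p < p" using p1 by simp
            ultimately show ?thesis using Suc cadj by simp
          qed
        qed
        moreover have "length qs = Suc p" unfolding qs_def using lc by simp
        ultimately show False using maxl[of qs] unfolding p_def by simp
      qed
      define T where "T = set ps"
      have TS: "T \<subseteq> S" unfolding T_def using sps .
      have cT: "card T = p" unfolding T_def p_def using dps by (simp add: distinct_card)
      have "(\<Sum>w\<in>S. card {z\<in>S. F w z}) = (\<Sum>w\<in>T. card {z\<in>T. F w z}) + (\<Sum>w\<in>S-T. card {z\<in>S-T. F w z})"
        using split_comp[OF fin TS _ sym] noe unfolding T_def by blast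
      also have "(\<Sum>w\<in>T. card {z\<in>T. F w z}) \<le> (\<Sum>w\<in>T. p - 1)"
      proof (intro sum_mono)
        fix w assume "w \<in> T"
        have "{z\<in>T. F w z} \<subseteq> T - {w}" using irr by auto
        then have "card {z\<in>T. F w z} \<le> card (T - {w})" by (intro card_mono) (auto simp: T_def)
        also have "\<dots> = p - 1" using \<open>w \<in> T\<close> cT by (simp add: T_def)
        finally show "card {z\<in>T. F w z} \<le> p - 1" .
      qed
      also have "(\<Sum>w\<in>T. p - 1) = p * (p - 1)" using cT by simp
      also have "p * (p - 1) \<le> p * (t - 2)" using pt by (intro mult_left_mono) auto
      finally have part1: "(\<Sum>w\<in>S. card {z\<in>S. F w z}) \<le> p * (t - 2) + (\<Sum>w\<in>S-T. card {z\<in>S-T. F w z})"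
        by simp
      have cR: "card (S - T) + p = card S" using card_Diff_subset[OF _ TS] cT card_mono[OF fin TS]
        by (simp add: T_def)
      have "card (S - T) < card S" using cR p1 by simp
      moreover have "\<not> (\<exists>ps. is_path F (S - T) ps \<and> length ps = t)"
        using nop is_path_mono[of "S - T" S F] by blast
      ultimately have IH: "(\<Sum>w\<in>S-T. card {z\<in>S-T. F w z}) \<le> (t - 2) * card (S - T)"
        using less.hyps[of "S - T"] fin by simp
      have "p * (t - 2) + (t - 2) * card (S - T) = (t - 2) * card S" using cR
        by (metis add.commute add_mult_distrib2 mult.commute)
      then show ?thesis using part1 IH by linarith
    qed
  qed
qed


lemma Pn_eq:
  assumes sg: "simple_graph n E"
  shows "(\<Sum>u<n. \<Sum>w<n. ind E u w * ind E z u * ind E z w)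
      = real (\<Sum>u\<in>{v\<in>{..<n}. E z v}. card {w\<in>{v\<in>{..<n}. E z v}. E u w})"
proof -
  define N where "N = {v\<in>{..<n}. E z v}"
  have inner: "(\<Sum>w<n. ind E u w * ind E z u * ind E z w) = ind E z u * real (card {w\<in>N. E u w})" for u
  proof -
    have "(\<Sum>w<n. ind E u w * ind E z u * ind E z w) = ind E z u * (\<Sum>w<n. if E z w \<and> E u w then 1 else 0)"
      unfolding sum_distrib_left by (intro sum.cong refl) (simp add: ind_def)
    also have "(\<Sum>w<n. if E z w \<and> E u w then 1 else (0::real)) = real (card {w\<in>{..<n}. E z w \<and> E u w})"
      by (rule card_filter_sum[symmetric]) simp
    also have "{w\<in>{..<n}. E z w \<and> E u w} = {w\<in>N. E u w}" unfolding N_def by auto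
    finally show ?thesis .
  qed
  have "(\<Sum>u<n. \<Sum>w<n. ind E u w * ind E z u * ind E z w) = (\<Sum>u<n. if E z u then real (card {w\<in>N. E u w}) else 0)"
    unfolding inner by (intro sum.cong refl) (simp add: ind_def)
  also have "\<dots> = (\<Sum>u\<in>N. real (card {w\<in>N. E u w}))"
    unfolding N_def by (rule sum.inter_filter[symmetric]) simp
  also have "\<dots> = real (\<Sum>u\<in>N. card {w\<in>N. E u w})" by simp
  finally show ?thesis unfolding N_def .
qed

lemma nbhd_bound:
  assumes sg: "simple_graph n E" and nc: "\<not> has_cycle n E (2 * k + 1)" and k: "1 \<le> k" and z: "z < n"
  shows "(\<Sum>u<n. \<Sum>w<n. ind E u w * ind E z u * ind E z w) \<le> real ((2 * k - 2) * (n - 1))"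
proof -
  define N where "N = {v\<in>{..<n}. E z v}"
  have sym: "\<forall>a b. E a b \<longrightarrow> E b a" and irr: "\<forall>a. \<not> E a a" using sg unfolding simple_graph_def by auto
  have nop: "\<not> (\<exists>ps. is_path E N ps \<and> length ps = 2 * k)"
  proof
    assume "\<exists>ps. is_path E N ps \<and> length ps = 2 * k"
    then obtain ps where ps: "is_path E N ps" "length ps = 2 * k" by blast
    have dps: "distinct ps" and sps: "set ps \<subseteq> N" and aps: "\<And>i. Suc i < 2 * k \<Longrightarrow> E (ps ! i) (ps ! Suc i)"
      using ps unfolding is_path_def by auto
    have zN: "z \<notin> N" using irr unfolding N_def by auto
    define f where "f i = (z # ps) ! i" for i
    have "has_cycle n E (2 * k + 1)"
      unfolding has_cycle_def
    proof (intro conjI exI[of _ f])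
      show "3 \<le> 2 * k + 1" using k by simp
      have "distinct (z # ps)" using dps zN sps by auto
      then show "inj_on f {0..<2 * k + 1}"
        unfolding f_def inj_on_def using ps(2) by (simp add: nth_eq_iff_index_eq)
      have "set (z # ps) \<subseteq> {0..<n}" using sps z unfolding N_def by auto
      then show "f ` {0..<2 * k + 1} \<subseteq> {0..<n}"
      proof -
        assume sub: "set (z # ps) \<subseteq> {0..<n}"
        show ?thesis
        proof
          fix v assume "v \<in> f ` {0..<2 * k + 1}"
          then obtain i where i: "i < 2 * k + 1" "v = (z # ps) ! i" unfolding f_def by auto
          then have "i < length (z # ps)" using ps(2) by simp
          then have "(z # ps) ! i \<in> set (z # ps)" by (rule nth_mem)
          then show "v \<in> {0..<n}" using sub i by auto
        qed
      qed
      show "\<forall>i<2 * k + 1. E (f i) (f (Suc i mod (2 * k + 1)))"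
      proof (intro allI impI)
        fix i assume i: "i < 2 * k + 1"
        show "E (f i) (f (Suc i mod (2 * k + 1)))"
        proof (cases "Suc i < 2 * k + 1")
          case True
          then have sm: "Suc i mod (2 * k + 1) = Suc i" by simp
          show ?thesis
          proof (cases i)
            case 0
            have "ps ! 0 \<in> N" using sps ps(2) k by (auto intro!: nth_mem)
            then show ?thesis using 0 sm unfolding f_def N_def by simp
          next
            case (Suc i')
            then show ?thesis using sm True aps[of i'] unfolding f_def by simp
          qed
        next
          case False
          then have ii: "i = 2 * k" using i by simp
          then have sm: "Suc i mod (2 * k + 1) = 0" by simp
          have "ps ! (2 * k - 1) \<in> N" using sps ps(2) k by (auto intro!: nth_mem)
          then have "E z (ps ! (2 * k - 1))" unfolding N_def by simp
          moreover have "f i = ps ! (2 * k - 1)"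
          proof -
            have "2 * k = Suc (2 * k - 1)" using k by simp
            then have "f i = (z # ps) ! Suc (2 * k - 1)" unfolding f_def ii by metis
            then show ?thesis by simp
          qed
          ultimately show ?thesis using sm sym unfolding f_def by simp
        qed
      qed
    qed
    then show False using nc by simp
  qed
  have finN: "finite N" unfolding N_def by simp
  have "(\<Sum>u\<in>N. card {w\<in>N. E u w}) \<le> (2 * k - 2) * card N"
    using EG[OF sym irr _ finN nop] k by simp
  also have "card N \<le> n - 1"
  proof -
    have "N \<subseteq> {..<n} - {z}" using irr unfolding N_def by auto
    then have "card N \<le> card ({..<n} - {z})" by (intro card_mono) auto
    then show ?thesis using z by simp
  qed
  then have "(2 * k - 2) * card N \<le> (2 * k - 2) * (n - 1)" by (intro mult_left_mono) auto
  finally have "(\<Sum>u\<in>N. card {w\<in>N. E u w}) \<le> (2 * k - 2) * (n - 1)" .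
  then show ?thesis using Pn_eq[OF sg, of z] unfolding N_def by (simp only: of_nat_le_iff)
qed

lemma tri_free_bound:
  assumes sg: "simple_graph n E" and nc: "\<not> has_cycle n E 3"
  shows "(\<Sum>u<n. \<Sum>w<n. ind E u w * ind E z u * ind E z w) \<le> 0"
proof -
  have zt: "ind E u w * ind E z u * ind E z w = 0" if "u < n" "w < n" for u w
  proof (rule ccontr)
    assume "ind E u w * ind E z u * ind E z w \<noteq> 0"
    then have e: "E u w" "E z u" "E z w" unfolding ind_def by (auto split: if_splits)
    define f where "f i = (if i = 0 then z else if i = 1 then u else w)" for i :: nat
    have d: "z \<noteq> u" "z \<noteq> w" "u \<noteq> w" "z < n"
      using e sg unfolding simple_graph_def by metis+
    have "has_cycle n E 3"
      unfolding has_cycle_def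
    proof (intro conjI exI[of _ f])
      show "inj_on f {0..<3}" unfolding inj_on_def f_def using d by auto
      show "f ` {0..<3} \<subseteq> {0..<n}" unfolding f_def using d that by auto
      show "\<forall>i<3. E (f i) (f (Suc i mod 3))"
      proof (intro allI impI)
        fix i :: nat assume "i < 3"
        have ewz: "E w z" using e(3) sg unfolding simple_graph_def by blast
        have "i = 0 \<or> i = 1 \<or> i = 2" using \<open>i < 3\<close> by auto
        then show "E (f i) (f (Suc i mod 3))"
        proof (elim disjE)
          assume "i = 0" then show ?thesis using e(2) unfolding f_def by simp
        next
          assume "i = 1" then show ?thesis using e(1) unfolding f_def by simp
        next
          assume "i = 2" then show ?thesis using ewz unfolding f_def by simp
        qed
      qed
    qed simp
    then show False using nc by simp
  qed
  have "(\<Sum>u<n. \<Sum>w<n. ind E u w * ind E z u * ind E z w) = 0"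
    by (intro sum.neutral ballI) (use zt in simp)
  then show ?thesis by simp
qed


theorem lemma4p2:
  fixes l k n :: nat and E :: "nat \<Rightarrow> nat \<Rightarrow> bool"
  assumes "1 \<le> l" and "l \<le> k - 1" and "n \<ge> 187 * k"
    and "extremal l k n E"
  shows "spec_rad n E > of_int \<lfloor>(real n - 2 * real l) / 2\<rfloor>
    \<and> of_int \<lfloor>(real n - 2 * real l) / 2\<rfloor> > real n / 2 - real k
    \<and> real (num_edges n E) \<ge> (real n)^2 / 4 - real k * real n + real k"
proof -
  have k2: "2 \<le> k" and lk: "l < k" using assms(1,2) by auto
  have nbig: "374 \<le> n" using assms(3) k2 by linarith
  define c where "c = 2 * l"
  define m where "m = n - c"
  define a where "a = m div 2"
  define p where "p = c + a"
  have c2: "2 \<le> c" using assms(1) unfolding c_def by simp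
  have cle: "c + 2 \<le> 2 * k" using lk unfolding c_def by simp
  have nk: "2 * k \<le> n" using assms(3) by linarith
  have mc: "m + c = n" unfolding m_def using cle nk by simp
  have m_ge: "n + 2 \<le> m + 2 * k" using mc cle by simp
  have m4: "4 \<le> m" using m_ge nbig nk assms(3) by linarith
  have a1: "1 \<le> a" unfolding a_def using m4 by simp
  have cp: "c < p" unfolding p_def using a1 by simp
  have am: "a < m" unfolding a_def using m4 by simp
  have pn: "p < n" unfolding p_def using am mc by simp
  have cn: "c < n" using cp pn by simp
  have pc: "p - c = a" unfolding p_def by simp
  have np: "n - p = m - a" unfolding p_def using mc by simp
  have m2: "m = 2 * a \<or> m = 2 * a + 1" unfolding a_def by presburger
  have aleb: "a \<le> m - a" using m2 by auto
  have m_sq: "m * m \<le> 4 * (a * (m - a)) + 1"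
  proof (cases "m = 2 * a")
    case True
    then have "m - a = a" by simp
    then show ?thesis using True by simp
  next
    case False
    then have m21: "m = 2 * a + 1" using m2 by simp
    then have "m - a = a + 1" by simp
    then show ?thesis unfolding m21 by (simp add: algebra_simps)
  qed
  have sE: "simple_graph n E" and nbE: "\<not> bipartite n E" and clkE: "Clk_free l k n E"
    and maxE: "\<And>H. simple_graph n H \<Longrightarrow> \<not> bipartite n H \<Longrightarrow> Clk_free l k n H \<Longrightarrow> spec_rad n H \<le> spec_rad n E"
    using assms(4) unfolding extremal_def by blast+
  have sH: "simple_graph n (Hg n c p)" using H_simple c2 cn by simp
  have nbH: "\<not> bipartite n (Hg n c p)" using H_nonbip c2 cn unfolding c_def by simp
  have clkH: "Clk_free l k n (Hg n c p)" using H_clk[of l k p n] assms(1) lk c2 cp unfolding c_def by simp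
  have "sqrt (real (p - c) * real (n - p)) < spec_rad n (Hg n c p)" using H_spec[OF c2 cp pn] .
  also have "\<dots> \<le> spec_rad n E" using maxE[OF sH nbH clkH] .
  finally have lamgt: "sqrt (real a * real (m - a)) < spec_rad n E" unfolding pc np .
  have "real a = sqrt (real a * real a)" by (simp add: real_sqrt_abs2)
  also have "\<dots> \<le> sqrt (real a * real (m - a))" using aleb by (intro real_sqrt_le_mono mult_left_mono) auto
  finally have asq: "real a \<le> sqrt (real a * real (m - a))" .
  have fl: "\<lfloor>(real n - 2 * real l) / 2\<rfloor> = int a"
  proof -
    have e: "(real n - 2 * real l) / 2 = real m / real (2::nat)" using mc unfolding c_def by (simp add: of_nat_diff)
    show ?thesis unfolding e a_def by (rule floor_divide_of_nat_eq)
  qed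
  have part1: "spec_rad n E > of_int \<lfloor>(real n - 2 * real l) / 2\<rfloor>" unfolding fl using asq lamgt by simp
  have part2: "of_int \<lfloor>(real n - 2 * real l) / 2\<rfloor> > real n / 2 - real k"
  proof -
    have "m \<le> 2 * a + 1" using m2 by auto
    then have "real m \<le> 2 * real a + 1" by simp
    moreover have "real m + 2 * real l = real n" using mc unfolding c_def by simp
    moreover have "real l + 1 \<le> real k" using lk by simp
    ultimately show ?thesis unfolding fl by simp
  qed
  define lam where "lam = spec_rad n E"
  have npos: "0 < n" using nbig by simp
  have lam2: "real a * real (m - a) < lam^2"
  proof -
    have "0 \<le> sqrt (real a * real (m - a))" by simp
    then have "(sqrt (real a * real (m - a)))^2 < lam^2"
      using lamgt unfolding lam_def by (intro power_strict_mono) auto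
    then show ?thesis by simp
  qed
  obtain x where xnz: "\<exists>i<n. x i \<noteq> 0" and xev: "\<forall>i<n. (\<Sum>j<n. (if E i j then 1 else 0) * x j) = lam * x i"
    using fun_of_ev[OF spec_rad_ev[OF npos sE]] unfolding lam_def by blast
  have xev': "\<forall>u<n. (\<Sum>v<n. ind E u v * x v) = lam * x u" using xev unfolding ind_def .
  define W where "W = real (num_edges n E)"
  have msq_r: "real m * real m \<le> 4 * (real a * real (m - a)) + 1"
  proof -
    have "real (m * m) \<le> real (4 * (a * (m - a)) + 1)" using m_sq by (simp only: of_nat_le_iff)
    then show ?thesis by simp
  qed
  have part3: "real n ^ 2 / 4 - real k * real n + real k \<le> W"
  proof (cases "l = 1")
    case True
    then have mn: "real m = real n - 2" using mc unfolding c_def by simp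
    have nc: "\<not> has_cycle n E (2 * k + 1)" using clkE unfolding Clk_free_def by (rule conjunct2)
    have PB: "\<forall>z<n. (\<Sum>u<n. \<Sum>w<n. ind E u w * ind E z u * ind E z w) \<le> real ((2 * k - 2) * (n - 1))"
    proof (intro allI impI)
      fix z assume "z < n"
      show "(\<Sum>u<n. \<Sum>w<n. ind E u w * ind E z u * ind E z w) \<le> real ((2 * k - 2) * (n - 1))"
        by (rule nbhd_bound[OF sE nc]) (use k2 \<open>z < n\<close> in auto)
    qed
    have "lam^2 \<le> W + real ((2 * k - 2) * (n - 1)) / 2"
      using nosal[OF sE xev' xnz PB] unfolding W_def .
    moreover have "real ((2 * k - 2) * (n - 1)) / 2 = (real k - 1) * (real n - 1)"
      using k2 npos by (simp add: of_nat_diff)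
    ultimately have h1: "lam^2 \<le> W + (real k - 1) * (real n - 1)" by simp
    have "real m * real m - 1 - 4 * ((real k - 1) * (real n - 1)) < 4 * W"
      using h1 lam2 msq_r by linarith
    moreover have "real m * real m - 1 - 4 * ((real k - 1) * (real n - 1))
        = real n ^ 2 - 4 * real k * real n + 4 * real k - 1"
      unfolding mn by (simp add: algebra_simps power2_eq_square)
    ultimately have lt: "real n ^ 2 - 4 * real k * real n + 4 * real k - 1 < 4 * W" by simp
    define Z where "Z = int n ^ 2 - 4 * int k * int n + 4 * int k"
    have Zr: "real_of_int Z = real n ^ 2 - 4 * real k * real n + 4 * real k" unfolding Z_def by simp
    have "real_of_int (Z - 1) < real_of_int (int (4 * num_edges n E))"
      using lt Zr unfolding W_def by simp
    then have "Z - 1 < int (4 * num_edges n E)" by (simp only: of_int_less_iff)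
    then have "Z \<le> int (4 * num_edges n E)" by simp
    then have "real_of_int Z \<le> real_of_int (int (4 * num_edges n E))" by (simp only: of_int_le_iff)
    then have "real n ^ 2 - 4 * real k * real n + 4 * real k \<le> 4 * W" using Zr unfolding W_def by simp
    then show ?thesis by simp
  next
    case False
    then have l2: "2 \<le> l" using assms(1) by simp
    have "\<forall>i. 1 \<le> i \<and> i \<le> l - 1 \<longrightarrow> \<not> has_cycle n E (2 * i + 1)"
      using clkE unfolding Clk_free_def by (rule conjunct1)
    from this[rule_format, of 1] l2 have "\<not> has_cycle n E 3" by simp
    then have PB: "\<forall>z<n. (\<Sum>u<n. \<Sum>w<n. ind E u w * ind E z u * ind E z w) \<le> 0"
      using tri_free_bound[OF sE] by blast
    have h1: "lam^2 \<le> W" using nosal[OF sE xev' xnz PB] unfolding W_def by simp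
    define d where "d = real n + 2 - 2 * real k"
    have d0: "0 \<le> d" unfolding d_def using nk by simp
    have dm: "d \<le> real m" unfolding d_def using m_ge by simp
    have "d * d \<le> real m * real m" using d0 dm by (intro mult_mono) auto
    moreover have "d * d - 1 - (real n ^ 2 - 4 * real k * real n + 4 * real k)
        = 4 * real n + (2 * real k - 3)^2 - 6"
      unfolding d_def by (simp add: algebra_simps power2_eq_square)
    moreover have "0 \<le> (2 * real k - 3)^2" by simp
    moreover have "(374::real) \<le> real n" using nbig by simp
    ultimately have "real n ^ 2 - 4 * real k * real n + 4 * real k \<le> real m * real m - 1" by linarith
    then show ?thesis using h1 lam2 msq_r by linarith
  qed
  show ?thesis using part1 part2 part3 unfolding W_def by simp
qed


end
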